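(* A tree $T$ has no full star-cutset if and only if $T$ is a path on at most $4$ vertices. A chandelier has no full star-cutset if and only if it is a luxury chandelier.
   Context: A full star-cutset of a connected graph $G$ is a set $N[u]=\{u\}\cup N(u)$ whose removal disconnects $G$ ($u$ is its center). A chandelier is a graph obtained from a tree $T$ by adding a new vertex adjacent to every leaf of $T$; it is a luxury chandelier if in $T$ the neighbor of each leaf has degree two. *)

theory Defs
  imports Main
begin

definition graph :: "'a set \<Rightarrow> 'a set set \<Rightarrow> bool" where
  "graph V E \<longleftrightarrow> finite V \<and> (\<forall>e\<in>E. \<exists>u v. e = {u, v} \<and> u \<noteq> v \<and> u \<in> V \<and> v \<in> V)"

text \<open>Adjacency inside the vertex set V (so (V - S) E is the induced subgraph G - S).\<close>
definition adj_in :: "'a set \<Rightarrow> 'a set set \<Rightarrow> 'a \<Rightarrow> 'a \<Rightarrow> bool" where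
  "adj_in V E a b \<longleftrightarrow> a \<in> V \<and> b \<in> V \<and> {a, b} \<in> E"

definition connected_graph :: "'a set \<Rightarrow> 'a set set \<Rightarrow> bool" where
  "connected_graph V E \<longleftrightarrow> V \<noteq> {} \<and> (\<forall>x\<in>V. \<forall>y\<in>V. (adj_in V E)\<^sup>*\<^sup>* x y)"

text \<open>Disconnected: at least two vertices in different components (the null graph is not disconnected).\<close>
definition disconnected_graph :: "'a set \<Rightarrow> 'a set set \<Rightarrow> bool" where
  "disconnected_graph V E \<longleftrightarrow> (\<exists>x\<in>V. \<exists>y\<in>V. \<not> (adj_in V E)\<^sup>*\<^sup>* x y)"

definition nbhd :: "'a set \<Rightarrow> 'a set set \<Rightarrow> 'a \<Rightarrow> 'a set" where
  "nbhd V E u = {v \<in> V. {u, v} \<in> E}"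

definition closed_nbhd :: "'a set \<Rightarrow> 'a set set \<Rightarrow> 'a \<Rightarrow> 'a set" where
  "closed_nbhd V E u = insert u (nbhd V E u)"

definition degree :: "'a set \<Rightarrow> 'a set set \<Rightarrow> 'a \<Rightarrow> nat" where
  "degree V E u = card (nbhd V E u)"

definition full_star_cutset :: "'a set \<Rightarrow> 'a set set \<Rightarrow> 'a \<Rightarrow> bool" where
  "full_star_cutset V E u \<longleftrightarrow> connected_graph V E \<and> u \<in> V \<and>
     disconnected_graph (V - closed_nbhd V E u) E"

definition has_full_star_cutset :: "'a set \<Rightarrow> 'a set set \<Rightarrow> bool" where
  "has_full_star_cutset V E \<longleftrightarrow> (\<exists>u\<in>V. full_star_cutset V E u)"

definition acyclic_graph :: "'a set \<Rightarrow> 'a set set \<Rightarrow> bool" where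
  "acyclic_graph V E \<longleftrightarrow> \<not> (\<exists>xs. length xs \<ge> 3 \<and> distinct xs \<and> set xs \<subseteq> V \<and>
      (\<forall>i < length xs. {xs ! i, xs ! ((i + 1) mod length xs)} \<in> E))"

definition tree :: "'a set \<Rightarrow> 'a set set \<Rightarrow> bool" where
  "tree V E \<longleftrightarrow> graph V E \<and> connected_graph V E \<and> acyclic_graph V E"

definition path_graph :: "'a set \<Rightarrow> 'a set set \<Rightarrow> bool" where
  "path_graph V E \<longleftrightarrow> (\<exists>xs. xs \<noteq> [] \<and> distinct xs \<and> set xs = V \<and>
      E = {{xs ! i, xs ! Suc i} | i. Suc i < length xs})"

definition leaves :: "'a set \<Rightarrow> 'a set set \<Rightarrow> 'a set" where
  "leaves V E = {v \<in> V. degree V E v = 1}"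

definition chandelier :: "'a set \<Rightarrow> 'a set set \<Rightarrow> 'a \<Rightarrow> bool" where
  "chandelier V E x \<longleftrightarrow> graph V E \<and> x \<in> V \<and>
     tree (V - {x}) {e \<in> E. x \<notin> e} \<and> card (V - {x}) \<ge> 3 \<and>
     nbhd V E x = leaves (V - {x}) {e \<in> E. x \<notin> e}"

definition luxury_chandelier :: "'a set \<Rightarrow> 'a set set \<Rightarrow> 'a \<Rightarrow> bool" where
  "luxury_chandelier V E x \<longleftrightarrow> chandelier V E x \<and>
     (let T = V - {x}; ET = {e \<in> E. x \<notin> e} in
       \<forall>v \<in> leaves T ET. \<forall>w \<in> nbhd T ET v. degree T ET w = 2)"

end

theory Submission
  imports Defs
begin


definition wk :: "'a set \<Rightarrow> 'a set set \<Rightarrow> 'a list \<Rightarrow> bool" where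
"wk W E cs \<longleftrightarrow> cs \<noteq> [] \<and> set cs \<subseteq> W \<and> (\<forall>i. Suc i < length cs \<longrightarrow> {cs!i, cs!Suc i} \<in> E)"

lemma graph_irr: "graph V E \<Longrightarrow> {a,a} \<notin> E"
  unfolding graph_def by (auto simp: doubleton_eq_iff)

lemma graph_in: "graph V E \<Longrightarrow> {a,b} \<in> E \<Longrightarrow> a \<in> V \<and> b \<in> V"
  unfolding graph_def by (auto simp: doubleton_eq_iff)

lemma adj_sym: "adj_in W E a b \<Longrightarrow> adj_in W E b a"
  unfolding adj_in_def by (auto simp: insert_commute)

lemma reach_sym: "(adj_in W E)\<^sup>*\<^sup>* a b \<Longrightarrow> (adj_in W E)\<^sup>*\<^sup>* b a"
proof (induction rule: rtranclp_induct)
  case base then show ?case by simp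
next
  case (step y z) then show ?case
    by (meson adj_sym converse_rtranclp_into_rtranclp)
qed

lemma reach_mono: "(\<And>p q. R p q \<Longrightarrow> S p q) \<Longrightarrow> R\<^sup>*\<^sup>* a b \<Longrightarrow> S\<^sup>*\<^sup>* a b"
  by (metis mono_rtranclp)

lemma wk_reach: "wk W E cs \<Longrightarrow> i \<le> j \<Longrightarrow> j < length cs \<Longrightarrow> (adj_in W E)\<^sup>*\<^sup>* (cs!i) (cs!j)"
proof (induction j)
  case 0 then show ?case by simp
next
  case (Suc j)
  show ?case
  proof (cases "i = Suc j")
    case True then show ?thesis by simp
  next
    case False
    then have "(adj_in W E)\<^sup>*\<^sup>* (cs!i) (cs!j)" using Suc by auto
    moreover have "adj_in W E (cs!j) (cs!Suc j)" using Suc.prems unfolding wk_def adj_in_def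
      by (metis Suc_lessD nth_mem subsetD)
    ultimately show ?thesis by auto
  qed
qed

lemma wk_snoc: "wk W E qs \<Longrightarrow> z \<in> W \<Longrightarrow> {last qs, z} \<in> E \<Longrightarrow> wk W E (qs @ [z])"
  unfolding wk_def
proof (intro conjI allI impI)
  fix i assume a: "qs \<noteq> [] \<and> set qs \<subseteq> W \<and> (\<forall>i. Suc i < length qs \<longrightarrow> {qs ! i, qs ! Suc i} \<in> E)"
    "z \<in> W" "{last qs, z} \<in> E" "Suc i < length (qs @ [z])"
  show "{(qs @ [z]) ! i, (qs @ [z]) ! Suc i} \<in> E"
  proof (cases "Suc i < length qs")
    case True then show ?thesis using a by (simp add: nth_append)
  next
    case False
    then have "i = length qs - 1" using a by auto
    then show ?thesis using a by (simp add: nth_append last_conv_nth)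
  qed
qed auto

lemma reach_wk: "(adj_in W E)\<^sup>*\<^sup>* a b \<Longrightarrow> a \<in> W \<Longrightarrow> \<exists>cs. wk W E cs \<and> distinct cs \<and> hd cs = a \<and> last cs = b"
proof (induction rule: rtranclp_induct)
  case base then show ?case by (intro exI[of _ "[a]"]) (auto simp: wk_def)
next
  case (step y z)
  then obtain cs where cs: "wk W E cs" "distinct cs" "hd cs = a" "last cs = y" by auto
  show ?case
  proof (cases "z \<in> set cs")
    case True
    then obtain k where k: "k < length cs" "cs!k = z" by (auto simp: in_set_conv_nth)
    have "wk W E (take (Suc k) cs)" using cs(1) k unfolding wk_def
      by (auto dest: in_set_takeD)
    moreover have "distinct (take (Suc k) cs)" using cs by auto
    moreover have "hd (take (Suc k) cs) = a" using cs k unfolding wk_def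
      by (metis hd_take zero_less_Suc)
    moreover have "last (take (Suc k) cs) = z" using k
      by (subst last_conv_nth) (auto simp: min_def intro: arg_cong[where f="nth cs"])
    ultimately show ?thesis by blast
  next
    case False
    have "wk W E (cs @ [z])" using cs step.hyps(2) by (intro wk_snoc) (auto simp: adj_in_def)
    moreover have "distinct (cs @ [z])" "hd (cs @ [z]) = a" "last (cs @ [z]) = z"
      using False cs unfolding wk_def by auto
    ultimately show ?thesis by blast
  qed
qed

lemma chord:
  assumes ac: "acyclic_graph V E" and sub: "set qs \<subseteq> V" and d: "distinct qs"
    and ed: "\<forall>i. Suc i < length qs \<longrightarrow> {qs!i, qs!Suc i} \<in> E"
    and ij: "i + 2 \<le> j" "j < length qs" and ch: "{qs!i, qs!j} \<in> E"
  shows False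
proof -
  define xs where "xs = map (\<lambda>k. qs!(i+k)) [0..<Suc (j-i)]"
  have len: "length xs = Suc (j - i)" by (simp add: xs_def)
  have nth: "\<And>k. k < Suc (j-i) \<Longrightarrow> xs!k = qs!(i+k)" unfolding xs_def by (simp del: upt_Suc)
  have "length xs \<ge> 3" using len ij by simp
  moreover have "distinct xs" unfolding distinct_conv_nth
  proof (intro allI impI)
    fix k l assume "k < length xs" "l < length xs" "k \<noteq> l"
    then show "xs!k \<noteq> xs!l" using nth len d ij by (simp add: nth_eq_iff_index_eq)
  qed
  moreover have "set xs \<subseteq> V" using sub ij by (auto simp: xs_def)
  moreover have "\<forall>k < length xs. {xs ! k, xs ! ((k + 1) mod length xs)} \<in> E"
  proof (intro allI impI)
    fix k assume k: "k < length xs"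
    show "{xs ! k, xs ! ((k + 1) mod length xs)} \<in> E"
    proof (cases "k + 1 < length xs")
      case True
      then have "(k+1) mod length xs = Suc k" by simp
      moreover have "xs!k = qs!(i+k)" "xs!Suc k = qs!Suc (i+k)" using True len nth by auto
      moreover have "Suc (i+k) < length qs" using True len ij by simp
      ultimately show ?thesis using ed by simp
    next
      case False
      then have "k = j - i" using k len by simp
      then have "(k+1) mod length xs = 0" using len by simp
      then show ?thesis using nth[of k] nth[of 0] \<open>k = j - i\<close> ij ch by (simp add: insert_commute)
    qed
  qed
  ultimately show False using ac unfolding acyclic_graph_def by blast
qed

lemma cut:
  assumes ac: "acyclic_graph V E" and W: "W \<subseteq> V" "y \<in> V" "y \<notin> W"
    and e: "{y,a} \<in> E" "{y,b} \<in> E" "a \<noteq> b" "a \<in> W" and r: "(adj_in W E)\<^sup>*\<^sup>* a b"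
  shows False
proof -
  obtain ps where ps: "wk W E ps" "distinct ps" "hd ps = a" "last ps = b" using reach_wk[OF r e(4)] by blast
  have ne: "ps \<noteq> []" using ps unfolding wk_def by auto
  have l2: "length ps \<ge> 2"
  proof (rule ccontr)
    assume "\<not> length ps \<ge> 2"
    then have "length ps = 1" using ne by (cases "length ps") auto
    then show False using ps e(3) by (cases ps) auto
  qed
  define qs where "qs = y # ps"
  have "set qs \<subseteq> V" using ps W unfolding qs_def wk_def by auto
  moreover have "distinct qs" using ps W unfolding qs_def wk_def by auto
  moreover have "\<forall>i. Suc i < length qs \<longrightarrow> {qs!i, qs!Suc i} \<in> E"
  proof (intro allI impI)
    fix i assume i: "Suc i < length qs"
    show "{qs!i, qs!Suc i} \<in> E"
    proof (cases i)
      case 0 then show ?thesis using e ps ne by (simp add: qs_def hd_conv_nth)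
    next
      case (Suc k) then show ?thesis using ps i unfolding qs_def wk_def by auto
    qed
  qed
  moreover have "{qs!0, qs!length ps} \<in> E" using e ps ne
    by (simp add: qs_def last_conv_nth)
  ultimately show False using chord[OF ac, of qs 0 "length ps"] l2 by (simp add: qs_def)
qed

lemma wk_len: "finite V \<Longrightarrow> wk V E qs \<Longrightarrow> distinct qs \<Longrightarrow> length qs \<le> card V"
  unfolding wk_def by (metis card_mono distinct_card)

lemma max_ext:
  assumes fin: "finite V" and cs: "wk V E cs" "distinct cs"
  shows "\<exists>qs. wk V E qs \<and> distinct qs \<and> take (length cs) qs = cs \<and> (\<forall>n\<in>V. {last qs, n} \<in> E \<longrightarrow> n \<in> set qs)"
proof -
  define P where "P = {qs. wk V E qs \<and> distinct qs \<and> take (length cs) qs = cs}"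
  have "P \<subseteq> {qs. set qs \<subseteq> V \<and> length qs \<le> card V}"
    using wk_len[OF fin] unfolding P_def by (auto simp: wk_def)
  then have fP: "finite P" by (rule finite_subset) (rule finite_lists_length_le[OF fin])
  have "cs \<in> P" using cs by (simp add: P_def)
  define m where "m = Max (length ` P)"
  have "m \<in> length ` P" unfolding m_def using fP \<open>cs \<in> P\<close> by (intro Max_in) auto
  then obtain qs where qs: "qs \<in> P" "length qs = m" by auto
  have mx: "\<And>q. q \<in> P \<Longrightarrow> length q \<le> m" unfolding m_def using fP by (intro Max_ge) auto
  have "\<forall>n\<in>V. {last qs, n} \<in> E \<longrightarrow> n \<in> set qs"
  proof (intro ballI impI, rule ccontr)
    fix n assume n: "n \<in> V" "{last qs, n} \<in> E" "n \<notin> set qs"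
    have q: "wk V E qs" "distinct qs" "take (length cs) qs = cs" using qs(1) by (auto simp: P_def)
    have w: "wk V E (qs @ [n])" using q n by (intro wk_snoc) auto
    have di: "distinct (qs @ [n])" using q n by simp
    have "length (take (length cs) qs) = length cs" using q by simp
    then have "length cs \<le> length qs" by simp
    then have "take (length cs) (qs @ [n]) = cs" using q by simp
    then have "qs @ [n] \<in> P" using w di by (simp add: P_def)
    then have "length (qs @ [n]) \<le> m" by (rule mx)
    then show False using qs(2) by simp
  qed
  then show ?thesis using qs by (auto simp: P_def)
qed

lemma end_nbrs:
  assumes g: "graph V E" and ac: "acyclic_graph V E" and qs: "wk V E qs" "distinct qs" "2 \<le> length qs"
    and mx: "\<forall>n\<in>V. {last qs, n} \<in> E \<longrightarrow> n \<in> set qs"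
  shows "{n\<in>V. {last qs, n} \<in> E} = {qs!(length qs - 2)}"
proof -
  have lst: "last qs = qs!(length qs - 1)" using qs by (simp add: last_conv_nth wk_def)
  have ed: "\<forall>i. Suc i < length qs \<longrightarrow> {qs!i, qs!Suc i} \<in> E" and sub: "set qs \<subseteq> V" using qs by (auto simp: wk_def)
  have "{qs!(length qs - 2), qs!Suc (length qs - 2)} \<in> E" using ed qs(3) by simp
  moreover have "Suc (length qs - 2) = length qs - 1" using qs(3) by simp
  ultimately have e1: "{last qs, qs!(length qs - 2)} \<in> E" using lst by (simp add: insert_commute)
  have "qs!(length qs - 2) \<in> V" using sub qs(3) by auto
  moreover have "\<forall>n. n \<in> V \<and> {last qs, n} \<in> E \<longrightarrow> n = qs!(length qs - 2)"
  proof (intro allI impI)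
    fix n assume n: "n \<in> V \<and> {last qs, n} \<in> E"
    show "n = qs!(length qs - 2)"
    proof -
    obtain j where j: "j < length qs" "qs!j = n" using mx n by (auto simp: in_set_conv_nth)
    consider "j = length qs - 1" | "j = length qs - 2" | "j + 2 \<le> length qs - 1" using j by linarith
    then show ?thesis
    proof cases
      case 1 then have "{last qs, last qs} \<in> E" using j n lst by simp
      then show ?thesis using graph_irr[OF g] by blast
    next
      case 2 then show ?thesis using j by simp
    next
      case 3
      have "{qs!j, qs!(length qs - 1)} \<in> E" using n j lst by (simp add: insert_commute)
      moreover have "length qs - 1 < length qs" using qs(3) by simp
      ultimately have False by (intro chord[OF ac sub qs(2) ed 3])
      then show ?thesis ..
    qed
  qed
  qed
  ultimately show ?thesis using e1 by blast
qed



lemma reach_mono2: "W \<subseteq> W' \<Longrightarrow> E \<subseteq> E' \<Longrightarrow> (adj_in W E)\<^sup>*\<^sup>* a b \<Longrightarrow> (adj_in W' E')\<^sup>*\<^sup>* a b"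
  by (erule reach_mono[rotated]) (auto simp: adj_in_def)

lemma triangle:
  assumes ac: "acyclic_graph V E" and "a \<in> V" "b \<in> V" "c \<in> V" "a \<noteq> b" "b \<noteq> c" "a \<noteq> c"
    and "{a,b} \<in> E" "{b,c} \<in> E" "{a,c} \<in> E"
  shows False
proof -
  have ed: "\<forall>i. Suc i < length [a,b,c] \<longrightarrow> {[a,b,c]!i, [a,b,c]!Suc i} \<in> E"
  proof (intro allI impI)
    fix i assume "Suc i < length [a,b,c]"
    then have "i = 0 \<or> i = 1" by auto
    then show "{[a,b,c]!i, [a,b,c]!Suc i} \<in> E" using assms by auto
  qed
  show False by (rule chord[OF ac _ _ ed, of 0 2]) (use assms in auto)
qed

lemma tree_facts: "tree V E \<Longrightarrow> graph V E \<and> connected_graph V E \<and> acyclic_graph V E"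
  by (simp add: tree_def)

lemma cut3:
  assumes t: "tree V E" and e: "{y,u}\<in>E" "{y,a}\<in>E" "{y,b}\<in>E" "u\<noteq>a" "u\<noteq>b" "a\<noteq>b"
  shows "has_full_star_cutset V E"
proof -
  have g: "graph V E" and cn: "connected_graph V E" and ac: "acyclic_graph V E" using t by (auto simp: tree_def)
  have inV: "y \<in> V" "u \<in> V" "a \<in> V" "b \<in> V" using graph_in[OF g] e by blast+
  have ne: "y \<noteq> u" "y \<noteq> a" "y \<noteq> b" using graph_irr[OF g] e by auto
  define W where "W = V - closed_nbhd V E u"
  have "{u,a} \<notin> E"
  proof
    assume "{u,a} \<in> E"
    then show False using triangle[OF ac, of u y a] inV ne e by (auto simp: insert_commute)
  qed
  then have aW: "a \<in> W" using inV e by (auto simp: W_def closed_nbhd_def nbhd_def)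
  have "{u,b} \<notin> E"
  proof
    assume "{u,b} \<in> E"
    then show False using triangle[OF ac, of u y b] inV ne e by (auto simp: insert_commute)
  qed
  then have bW: "b \<in> W" using inV e by (auto simp: W_def closed_nbhd_def nbhd_def)
  have yW: "y \<notin> W" using inV e by (auto simp: W_def closed_nbhd_def nbhd_def insert_commute)
  have "\<not> (adj_in W E)\<^sup>*\<^sup>* a b"
  proof
    assume r: "(adj_in W E)\<^sup>*\<^sup>* a b"
    show False by (rule cut[OF ac _ inV(1) yW e(2) e(3) e(6) aW r]) (auto simp: W_def)
  qed
  then have "disconnected_graph W E" using aW bW by (auto simp: disconnected_graph_def)
  then show ?thesis using cn inV unfolding has_full_star_cutset_def full_star_cutset_def W_def by blast
qed

lemma cut5:
  assumes t: "tree V E" and d: "distinct [a,b,c,d,e]"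
    and e: "{a,b}\<in>E" "{b,c}\<in>E" "{c,d}\<in>E" "{d,e}\<in>E"
  shows "has_full_star_cutset V E"
proof -
  have g: "graph V E" and cn: "connected_graph V E" and ac: "acyclic_graph V E" using t by (auto simp: tree_def)
  have inV: "a \<in> V" "b \<in> V" "c \<in> V" "d \<in> V" "e \<in> V" using graph_in[OF g] e by blast+
  define W where "W = V - closed_nbhd V E c"
  have "{c,a} \<notin> E"
  proof
    assume "{c,a} \<in> E"
    then show False using triangle[OF ac, of a b c] inV d e by (auto simp: insert_commute)
  qed
  then have aW: "a \<in> W" using inV d by (auto simp: W_def closed_nbhd_def nbhd_def)
  have "{c,e} \<notin> E"
  proof
    assume "{c,e} \<in> E"
    then show False using triangle[OF ac, of c d e] inV d e by (auto simp: insert_commute)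
  qed
  then have eW: "e \<in> W" using inV d by (auto simp: W_def closed_nbhd_def nbhd_def)
  have bW: "b \<notin> W" using inV e by (auto simp: W_def closed_nbhd_def nbhd_def insert_commute)
  have "\<not> (adj_in W E)\<^sup>*\<^sup>* a e"
  proof
    assume r: "(adj_in W E)\<^sup>*\<^sup>* a e"
    have "W \<subseteq> V - {b}" using bW by (auto simp: W_def)
    then have r1: "(adj_in (V - {b}) E)\<^sup>*\<^sup>* a e" using reach_mono2[OF _ _ r] by blast
    have "adj_in (V - {b}) E e d" "adj_in (V - {b}) E d c"
      using inV d e by (auto simp: adj_in_def insert_commute)
    then have "(adj_in (V - {b}) E)\<^sup>*\<^sup>* e c" by auto
    then have r2: "(adj_in (V - {b}) E)\<^sup>*\<^sup>* a c" using r1 by auto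
    show False by (rule cut[OF ac _ inV(2) _ _ _ _ _ r2]) (use inV d e in \<open>auto simp: insert_commute\<close>)
  qed
  then have "disconnected_graph W E" using aW eW by (auto simp: disconnected_graph_def)
  then show ?thesis using cn inV unfolding has_full_star_cutset_def full_star_cutset_def W_def by blast
qed



lemma longest:
  assumes fin: "finite V" and ne: "V \<noteq> {}"
  shows "\<exists>qs. wk V E qs \<and> distinct qs \<and> (\<forall>q. wk V E q \<and> distinct q \<longrightarrow> length q \<le> length qs)"
proof -
  define P where "P = {qs. wk V E qs \<and> distinct qs}"
  have "P \<subseteq> {qs. set qs \<subseteq> V \<and> length qs \<le> card V}"
    using wk_len[OF fin] unfolding P_def by (auto simp: wk_def)
  then have fP: "finite P" by (rule finite_subset) (rule finite_lists_length_le[OF fin])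
  obtain c where "c \<in> V" using ne by auto
  then have "[c] \<in> P" by (simp add: P_def wk_def)
  define m where "m = Max (length ` P)"
  have "m \<in> length ` P" unfolding m_def using fP \<open>[c] \<in> P\<close> by (intro Max_in) auto
  then obtain qs where qs: "qs \<in> P" "length qs = m" by auto
  have mx: "\<And>q. q \<in> P \<Longrightarrow> length q \<le> m" unfolding m_def using fP by (intro Max_ge) auto
  show ?thesis using qs mx by (auto simp: P_def)
qed

lemma part1a:
  assumes t: "tree V E" and nc: "\<not> has_full_star_cutset V E"
  shows "path_graph V E \<and> card V \<le> 4"
proof -
  have g: "graph V E" and cn: "connected_graph V E" and ac: "acyclic_graph V E" using t by (auto simp: tree_def)
  have fin: "finite V" using g by (simp add: graph_def)
  have ne: "V \<noteq> {}" using cn by (simp add: connected_graph_def)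
  obtain qs where qs: "wk V E qs" "distinct qs" and mx: "\<And>q. wk V E q \<Longrightarrow> distinct q \<Longrightarrow> length q \<le> length qs"
    using longest[OF fin ne] by blast
  have qne: "qs \<noteq> []" and sub: "set qs \<subseteq> V" and ed: "\<And>i. Suc i < length qs \<Longrightarrow> {qs!i, qs!Suc i} \<in> E"
    using qs by (auto simp: wk_def)
  have edA: "\<forall>i. Suc i < length qs \<longrightarrow> {qs!i, qs!Suc i} \<in> E" using ed by blast
  have len: "length qs \<le> 4"
  proof (rule ccontr)
    assume "\<not> length qs \<le> 4"
    then have l5: "5 \<le> length qs" by simp
    have dq: "\<And>k l. qs!k = qs!l \<Longrightarrow> k < length qs \<Longrightarrow> l < length qs \<Longrightarrow> k = l"
      using nth_eq_iff_index_eq[OF qs(2)] by blast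
    have "distinct [qs!0, qs!1, qs!2, qs!3, qs!4]" using l5 by (auto dest: dq)
    moreover have "{qs!0, qs!1}\<in>E" "{qs!1, qs!2}\<in>E" "{qs!2, qs!3}\<in>E" "{qs!3, qs!4}\<in>E"
      using ed[of 0] ed[of 1] ed[of 2] ed[of 3] l5 by (auto simp: numeral_eq_Suc)
    ultimately have "has_full_star_cutset V E" using cut5[OF t] by blast
    then show False using nc by simp
  qed
  have D: "n \<in> set qs" if i: "0 < i" "Suc i < length qs" and n: "{qs!i, n} \<in> E" for i n
  proof (rule ccontr)
    assume nn: "n \<notin> set qs"
    have e1: "{qs!i, qs!(i-1)} \<in> E" using ed[of "i-1"] i by (simp add: insert_commute)
    have e2: "{qs!i, qs!Suc i} \<in> E" using ed i by simp
    have "qs!(i-1) \<noteq> qs!Suc i" using qs(2) i by (simp add: nth_eq_iff_index_eq)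
    moreover have "qs!(i-1) \<in> set qs" "qs!Suc i \<in> set qs" using i by auto
    ultimately have "has_full_star_cutset V E" using cut3[OF t e1 e2 n] nn by metis
    then show False using nc by simp
  qed
  have clos: "b \<in> set qs" if a: "a \<in> set qs" and ab: "{a,b} \<in> E" for a b
  proof (rule ccontr)
    assume nb: "b \<notin> set qs"
    obtain i where i: "i < length qs" "qs!i = a" using a by (auto simp: in_set_conv_nth)
    have bV: "b \<in> V" using graph_in[OF g ab] by simp
    consider "i = length qs - 1" | "i = 0" | "0 < i \<and> Suc i < length qs" using i by linarith
    then show False
    proof cases
      case 1
      then have "last qs = a" using i qne by (simp add: last_conv_nth)
      then have "wk V E (qs @ [b])" using qs bV ab by (intro wk_snoc) auto
      moreover have "distinct (qs @ [b])" using qs nb by simp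
      ultimately show False using mx[of "qs @ [b]"] by simp
    next
      case 2
      have "wk V E (b # qs)" unfolding wk_def
      proof (intro conjI allI impI)
        show "set (b # qs) \<subseteq> V" using sub bV by simp
        fix j assume j: "Suc j < length (b # qs)"
        show "{(b # qs) ! j, (b # qs) ! Suc j} \<in> E"
        proof (cases j)
          case 0 then show ?thesis using ab i 2 by (simp add: insert_commute)
        next
          case (Suc k) then show ?thesis using ed j by simp
        qed
      qed simp
      moreover have "distinct (b # qs)" using qs nb by simp
      ultimately show False using mx[of "b # qs"] by simp
    next
      case 3 then show False using D[of i b] ab i nb by simp
    qed
  qed
  have VS: "V = set qs"
  proof
    show "set qs \<subseteq> V" by (rule sub)
    show "V \<subseteq> set qs"
    proof
      fix v assume v: "v \<in> V"
      have h: "hd qs \<in> V" using qne sub by auto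
      have "(adj_in V E)\<^sup>*\<^sup>* (hd qs) v" using cn h v by (auto simp: connected_graph_def)
      then show "v \<in> set qs"
      proof (induction rule: rtranclp_induct)
        case base then show ?case using qne by simp
      next
        case (step y z) then show ?case using clos by (auto simp: adj_in_def)
      qed
    qed
  qed
  have ES: "E = {{qs ! i, qs ! Suc i} | i. Suc i < length qs}"
  proof
    show "{{qs ! i, qs ! Suc i} | i. Suc i < length qs} \<subseteq> E" using ed by auto
    show "E \<subseteq> {{qs ! i, qs ! Suc i} | i. Suc i < length qs}"
    proof
      fix e assume e: "e \<in> E"
      then obtain p q where pq: "e = {p,q}" "p \<noteq> q" "p \<in> V" "q \<in> V" using g by (auto simp: graph_def)
      obtain i where i: "i < length qs" "qs!i = p" using pq VS by (auto simp: in_set_conv_nth)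
      obtain j where j: "j < length qs" "qs!j = q" using pq VS by (auto simp: in_set_conv_nth)
      have key: "e = {qs!k, qs!Suc k} \<and> Suc k < length qs"
        if kl: "k < l" "l < length qs" "e = {qs!k, qs!l}" for k l
      proof (cases "l = Suc k")
        case True then show ?thesis using kl by simp
      next
        case False
        then have "k + 2 \<le> l" using kl by simp
        then have False using chord[OF ac sub qs(2) edA, of k l] kl e by blast
        then show ?thesis ..
      qed
      have "i \<noteq> j" using i j pq by auto
      then have "\<exists>k. e = {qs!k, qs!Suc k} \<and> Suc k < length qs"
      proof (cases "i < j")
        case True then show ?thesis using key[of i j] i j pq by blast
      next
        case False
        then have "j < i" using \<open>i \<noteq> j\<close> by simp
        then show ?thesis using key[of j i] i j pq by (metis insert_commute)
      qed
      then show "e \<in> {{qs ! i, qs ! Suc i} | i. Suc i < length qs}" by blast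
    qed
  qed
  have "path_graph V E" unfolding path_graph_def using qne qs(2) VS ES by blast
  moreover have "card V \<le> 4" using VS distinct_card[OF qs(2)] len by simp
  ultimately show ?thesis by simp
qed



lemma nd1: "W \<subseteq> {p} \<Longrightarrow> \<not> disconnected_graph W E"
  unfolding disconnected_graph_def by auto

lemma nd2: assumes "{p,q} \<in> E" "W = {p,q}" shows "\<not> disconnected_graph W E"
proof -
  have "adj_in {p,q} E p q" "adj_in {p,q} E q p" using assms by (auto simp: adj_in_def insert_commute)
  then have "\<forall>x\<in>{p,q}. \<forall>y\<in>{p,q}. (adj_in {p, q} E)\<^sup>*\<^sup>* x y" by auto
  then show ?thesis using assms(2) unfolding disconnected_graph_def by blast
qed

lemma nocut_iff: "\<not> has_full_star_cutset V E \<longleftrightarrow> (\<forall>u\<in>V. connected_graph V E \<longrightarrow> \<not> disconnected_graph (V - closed_nbhd V E u) E)"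
  unfolding has_full_star_cutset_def full_star_cutset_def by blast


lemma E4: "{{[a,b,c,d] ! i, [a,b,c,d] ! Suc i} | i. Suc i < length [a,b,c,d]} = {{a,b},{b,c},{c,d}}"
  (is "?S = _")
proof (intro set_eqI iffI)
  fix e assume "e \<in> ?S"
  then obtain i where "e = {[a,b,c,d] ! i, [a,b,c,d] ! Suc i}" "i < 3" by auto
  moreover have "i < 3 \<Longrightarrow> i = 0 \<or> i = 1 \<or> i = 2" by arith
  ultimately show "e \<in> {{a,b},{b,c},{c,d}}" by auto
next
  fix e assume "e \<in> {{a,b},{b,c},{c,d}}"
  moreover have "{a,b} \<in> ?S" by (intro CollectI exI[of _ "0::nat"]) simp
  moreover have "{b,c} \<in> ?S" by (intro CollectI exI[of _ "1::nat"]) simp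
  moreover have "{c,d} \<in> ?S" by (intro CollectI exI[of _ "2::nat"]) (simp add: numeral_eq_Suc)
  ultimately show "e \<in> ?S" by blast
qed
lemma E3: "{{[a,b,c] ! i, [a,b,c] ! Suc i} | i. Suc i < length [a,b,c]} = {{a,b},{b,c}}"
  (is "?S = _")
proof (intro set_eqI iffI)
  fix e assume "e \<in> ?S"
  then obtain i where "e = {[a,b,c] ! i, [a,b,c] ! Suc i}" "i < 2" by auto
  moreover have "i < 2 \<Longrightarrow> i = 0 \<or> i = 1" by arith
  ultimately show "e \<in> {{a,b},{b,c}}" by auto
next
  fix e assume "e \<in> {{a,b},{b,c}}"
  moreover have "{a,b} \<in> ?S" by (intro CollectI exI[of _ "0::nat"]) simp
  moreover have "{b,c} \<in> ?S" by (intro CollectI exI[of _ "1::nat"]) simp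
  ultimately show "e \<in> ?S" by blast
qed
lemma E2: "{{[a,b] ! i, [a,b] ! Suc i} | i. Suc i < length [a,b]} = {{a,b}}"
  (is "?S = _")
proof (intro set_eqI iffI)
  fix e assume "e \<in> ?S"
  then obtain i where "e = {[a,b] ! i, [a,b] ! Suc i}" "i < 1" by auto
  then show "e \<in> {{a,b}}" by auto
next
  fix e assume "e \<in> {{a,b}}"
  moreover have "{a,b} \<in> ?S" by (intro CollectI exI[of _ "0::nat"]) simp
  ultimately show "e \<in> ?S" by blast
qed


lemma P4: assumes dd: "a \<noteq> b" "a \<noteq> c" "b \<noteq> c" "a \<noteq> d" "b \<noteq> d" "c \<noteq> d"
  shows "\<not> has_full_star_cutset {a,b,c,d} {{a,b},{b,c},{c,d}}"
  unfolding nocut_iff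
proof (intro ballI impI)
  fix u assume "u \<in> {a,b,c,d}"
  then have "u = a \<or> u = b \<or> u = c \<or> u = d" by auto
  then show "\<not> disconnected_graph ({a,b,c,d} - closed_nbhd {a,b,c,d} {{a,b},{b,c},{c,d}} u) {{a,b},{b,c},{c,d}}"
  proof (elim disjE)
    assume "u = a"
    then have "{a,b,c,d} - closed_nbhd {a,b,c,d} {{a,b},{b,c},{c,d}} u = {c,d}" using dd
      by (auto simp: closed_nbhd_def nbhd_def doubleton_eq_iff)
    then show ?thesis by (intro nd2[of c d]) auto
  next
    assume "u = b"
    then have "{a,b,c,d} - closed_nbhd {a,b,c,d} {{a,b},{b,c},{c,d}} u \<subseteq> {d}" using dd
      by (auto simp: closed_nbhd_def nbhd_def doubleton_eq_iff)
    then show ?thesis by (meson nd1)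
  next
    assume "u = c"
    then have "{a,b,c,d} - closed_nbhd {a,b,c,d} {{a,b},{b,c},{c,d}} u \<subseteq> {a}" using dd
      by (auto simp: closed_nbhd_def nbhd_def doubleton_eq_iff)
    then show ?thesis by (meson nd1)
  next
    assume "u = d"
    then have "{a,b,c,d} - closed_nbhd {a,b,c,d} {{a,b},{b,c},{c,d}} u = {a,b}" using dd
      by (auto simp: closed_nbhd_def nbhd_def doubleton_eq_iff)
    then show ?thesis by (intro nd2[of a b]) auto
  qed
qed

lemma P3: assumes dd: "a \<noteq> b" "a \<noteq> c" "b \<noteq> c"
  shows "\<not> has_full_star_cutset {a,b,c} {{a,b},{b,c}}"
  unfolding nocut_iff
proof (intro ballI impI)
  fix u assume "u \<in> {a,b,c}"
  then have "{a,b,c} - closed_nbhd {a,b,c} {{a,b},{b,c}} u \<subseteq> {a} \<or> {a,b,c} - closed_nbhd {a,b,c} {{a,b},{b,c}} u \<subseteq> {c}" using dd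
    by (auto simp: closed_nbhd_def nbhd_def doubleton_eq_iff)
  then show "\<not> disconnected_graph ({a,b,c} - closed_nbhd {a,b,c} {{a,b},{b,c}} u) {{a,b},{b,c}}" by (meson nd1)
qed

lemma P2: "\<not> has_full_star_cutset {a,b} {{a,b}}"
  unfolding nocut_iff
proof (intro ballI impI)
  fix u assume "u \<in> {a,b}"
  then have "{a,b} - closed_nbhd {a,b} {{a,b}} u \<subseteq> {a}"
    by (auto simp: closed_nbhd_def nbhd_def insert_commute)
  then show "\<not> disconnected_graph ({a,b} - closed_nbhd {a,b} {{a,b}} u) {{a,b}}" by (meson nd1)
qed

lemma P1: "\<not> has_full_star_cutset {a} E"
  unfolding nocut_iff by (meson Diff_subset nd1)

lemma part1b:
  assumes p: "path_graph V E" and c: "card V \<le> 4"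
  shows "\<not> has_full_star_cutset V E"
proof -
  obtain xs where xs: "xs \<noteq> []" "distinct xs" "set xs = V" "E = {{xs ! i, xs ! Suc i} | i. Suc i < length xs}"
    using p by (auto simp: path_graph_def)
  have "length xs \<le> 4" using c xs distinct_card by metis
  moreover have "length xs \<ge> 1" using xs(1) by (cases xs) auto
  ultimately have "length xs = 1 \<or> length xs = 2 \<or> length xs = 3 \<or> length xs = 4" by arith
  then show ?thesis
  proof (elim disjE)
    assume "length xs = 1"
    then obtain a where "xs = [a]" by (cases xs) auto
    then have "V = {a}" using xs by simp
    then show ?thesis using P1 by simp
  next
    assume "length xs = 2"
    then obtain a b where ab: "xs = [a,b]" by (cases xs; cases "tl xs") auto
    have V: "V = {a,b}" using xs ab by simp
    have E: "E = {{a,b}}" by (simp only: xs(4) ab E2)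
    show ?thesis unfolding V E by (rule P2)
  next
    assume "length xs = 3"
    then obtain a b c where ab: "xs = [a,b,c]" by (cases xs; cases "tl xs"; cases "tl (tl xs)") auto
    have V: "V = {a,b,c}" using xs ab by simp
    have E: "E = {{a,b},{b,c}}" by (simp only: xs(4) ab E3)
    show ?thesis unfolding V E by (rule P3) (use xs(2) ab in auto)
  next
    assume "length xs = 4"
    then obtain a b c d where ab: "xs = [a,b,c,d]"
      by (cases xs; cases "tl xs"; cases "tl (tl xs)"; cases "tl (tl (tl xs))") auto
    have V: "V = {a,b,c,d}" using xs ab by simp
    have E: "E = {{a,b},{b,c},{c,d}}" by (simp only: xs(4) ab E4)
    show ?thesis unfolding V E by (rule P4) (use xs(2) ab in auto)
  qed
qed



lemma seg_reach:
  assumes "\<forall>k. i \<le> k \<and> k \<le> j \<longrightarrow> qs!k \<in> W" "\<forall>k. Suc k < length qs \<longrightarrow> {qs!k, qs!Suc k} \<in> E"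
    "i \<le> j" "j < length qs"
  shows "(adj_in W E)\<^sup>*\<^sup>* (qs!i) (qs!j)"
  using assms
proof (induction j)
  case 0 then show ?case by simp
next
  case (Suc j)
  show ?case
  proof (cases "i = Suc j")
    case True then show ?thesis by simp
  next
    case False
    then have "(adj_in W E)\<^sup>*\<^sup>* (qs!i) (qs!j)" using Suc by auto
    moreover have "adj_in W E (qs!j) (qs!Suc j)" using Suc.prems False unfolding adj_in_def by auto
    ultimately show ?thesis by auto
  qed
qed

lemma int_nbrs:
  assumes "wk T ET cs" "distinct cs" "0 < i" "Suc i < length cs"
  shows "cs!(i-1) \<in> nbhd T ET (cs!i) \<and> cs!Suc i \<in> nbhd T ET (cs!i) \<and> cs!(i-1) \<noteq> cs!Suc i"
proof -
  have ed: "\<forall>k. Suc k < length cs \<longrightarrow> {cs!k, cs!Suc k} \<in> ET" and sub: "set cs \<subseteq> T" using assms(1) by (auto simp: wk_def)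
  have "Suc (i-1) < length cs" "Suc (i-1) = i" using assms by auto
  then have "{cs!(i-1), cs!Suc (i-1)} \<in> ET" using ed by blast
  then have "{cs!i, cs!(i-1)} \<in> ET" using assms by (simp add: insert_commute)
  moreover have "cs!(i-1) \<in> T" "cs!Suc i \<in> T" using sub assms by auto
  moreover have "{cs!i, cs!Suc i} \<in> ET" using ed assms by simp
  moreover have "cs!(i-1) \<noteq> cs!Suc i" using assms by (simp add: nth_eq_iff_index_eq)
  ultimately show ?thesis by (simp add: nbhd_def)
qed

lemma deg2:
  assumes "finite T" "a \<in> nbhd T ET v" "b \<in> nbhd T ET v" "a \<noteq> b"
  shows "2 \<le> degree T ET v"
proof -
  have "finite (nbhd T ET v)" using assms(1) by (simp add: nbhd_def)
  then have "card {a,b} \<le> card (nbhd T ET v)" using assms by (intro card_mono) auto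
  then show ?thesis using assms(4) by (simp add: degree_def)
qed

lemma int_deg:
  assumes "finite T" "wk T ET cs" "distinct cs" "0 < i" "Suc i < length cs"
  shows "2 \<le> degree T ET (cs!i)"
  using int_nbrs[OF assms(2-5)] deg2[OF assms(1)] by blast



lemma chand_facts:
  assumes "chandelier V E x"
  shows "graph V E" "x \<in> V" "graph (V - {x}) {e \<in> E. x \<notin> e}" "connected_graph (V - {x}) {e \<in> E. x \<notin> e}"
    "acyclic_graph (V - {x}) {e \<in> E. x \<notin> e}" "card (V - {x}) \<ge> 3" "finite (V - {x})"
    "nbhd V E x = leaves (V - {x}) {e \<in> E. x \<notin> e}"
  using assms by (auto simp: chandelier_def tree_def graph_def)

lemma leaf_E:
  assumes "chandelier V E x" "v \<in> V - {x}"
  shows "{x,v} \<in> E \<longleftrightarrow> v \<in> leaves (V - {x}) {e \<in> E. x \<notin> e}"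
  using chand_facts(8)[OF assms(1)] assms(2) by (auto simp: nbhd_def set_eq_iff)

lemma chand_conn:
  assumes c: "chandelier V E x" and v: "v \<in> leaves (V - {x}) {e \<in> E. x \<notin> e}"
  shows "connected_graph V E"
proof -
  let ?T = "V - {x}" and ?ET = "{e \<in> E. x \<notin> e}"
  have vT: "v \<in> ?T" using v by (simp add: leaves_def)
  have xv: "{x,v} \<in> E" using leaf_E[OF c vT] v by simp
  have xV: "x \<in> V" using chand_facts[OF c] by simp
  have toV: "(adj_in V E)\<^sup>*\<^sup>* p v" if p: "p \<in> V" for p
  proof (cases "p = x")
    case True
    then have "adj_in V E p v" using xv xV vT by (auto simp: adj_in_def)
    then show ?thesis by auto
  next
    case False
    then have "(adj_in ?T ?ET)\<^sup>*\<^sup>* p v" using chand_facts(4)[OF c] p vT by (auto simp: connected_graph_def)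
    then show ?thesis by (rule reach_mono2[rotated 2]) auto
  qed
  show ?thesis unfolding connected_graph_def
  proof (intro conjI ballI)
    show "V \<noteq> {}" using xV by auto
    fix p q assume "p \<in> V" "q \<in> V"
    then show "(adj_in V E)\<^sup>*\<^sup>* p q" using toV reach_sym by (metis rtranclp_trans)
  qed
qed

lemma part2a:
  assumes c: "chandelier V E x" and nl: "\<not> luxury_chandelier V E x"
  shows "has_full_star_cutset V E"
proof -
  define T where "T = V - {x}"
  define ET where "ET = {e \<in> E. x \<notin> e}"
  have g: "graph V E" and xV: "x \<in> V" and gT: "graph T ET" and cT: "connected_graph T ET"
    and acT: "acyclic_graph T ET" and c3: "card T \<ge> 3" and fT: "finite T"
    and L: "nbhd V E x = leaves T ET"
    using chand_facts[OF c] unfolding T_def ET_def by auto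
  obtain v w where v: "v \<in> leaves T ET" and w: "w \<in> nbhd T ET v" and dw: "degree T ET w \<noteq> 2"
    using nl c unfolding luxury_chandelier_def T_def ET_def Let_def by blast
  have vT: "v \<in> T" using v by (simp add: leaves_def)
  have "card (nbhd T ET v) = 1" using v by (simp add: leaves_def degree_def)
  then have nv: "nbhd T ET v = {w}" using w by (auto simp: card_1_singleton_iff)
  have wT: "w \<in> T" and vw: "{v,w} \<in> ET" using w by (auto simp: nbhd_def)
  have vnw: "v \<in> nbhd T ET w" using vw vT by (auto simp: nbhd_def insert_commute)
  have fw: "finite (nbhd T ET w)" using fT by (simp add: nbhd_def)
  have "card (nbhd T ET w) \<ge> 1" using vnw fw by (metis One_nat_def Suc_leI card_gt_0_iff empty_iff)
  moreover have "card (nbhd T ET w) \<noteq> 1"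
  proof
    assume "card (nbhd T ET w) = 1"
    then have nw: "nbhd T ET w = {v}" using vnw by (auto simp: card_1_singleton_iff)
    have "T \<subseteq> {v,w}"
    proof
      fix t assume t: "t \<in> T"
      have "(adj_in T ET)\<^sup>*\<^sup>* v t" using cT vT t by (auto simp: connected_graph_def)
      then show "t \<in> {v,w}"
      proof (induction rule: rtranclp_induct)
        case base then show ?case by simp
      next
        case (step y z)
        then have "z \<in> nbhd T ET y" by (auto simp: adj_in_def nbhd_def)
        then show ?case using step nv nw by auto
      qed
    qed
    then have "card T \<le> card {v,w}" by (intro card_mono) auto
    also have "\<dots> \<le> 2" by (simp add: card_insert_le_m1)
    finally show False using c3 by simp
  qed
  ultimately have "card (nbhd T ET w) \<ge> 3" using dw by (simp add: degree_def)
  then have "card (nbhd T ET w - {v}) \<ge> 2" using vnw fw by simp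
  then obtain a where a: "a \<in> nbhd T ET w - {v}" by (metis all_not_in_conv card.empty not_numeral_le_zero)
  have "card (nbhd T ET w - {v} - {a}) \<ge> 1" using a fw \<open>card (nbhd T ET w - {v}) \<ge> 2\<close> by simp
  then obtain b where b: "b \<in> nbhd T ET w - {v} - {a}" by (metis all_not_in_conv card.empty not_one_le_zero)
  have aT: "a \<in> T" "{w,a} \<in> ET" "a \<noteq> v" using a by (auto simp: nbhd_def)
  have bT: "b \<in> T" "{w,b} \<in> ET" "b \<noteq> v" "b \<noteq> a" using b by (auto simp: nbhd_def)
  have irr: "\<And>z. {z,z} \<notin> ET" using graph_irr[OF gT] .
  have aw: "a \<noteq> w" using aT irr by auto
  have bw: "b \<noteq> w" using bT irr by auto
  define W where "W = V - closed_nbhd V E v"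
  have xE: "{x,v} \<in> E" using L vT v by (auto simp: nbhd_def set_eq_iff)
  have aW: "a \<in> W"
  proof -
    have "{v,a} \<notin> E"
    proof
      assume "{v,a} \<in> E"
      then have "{v,a} \<in> ET" using aT vT by (auto simp: ET_def T_def)
      then have "a \<in> nbhd T ET v" using aT by (simp add: nbhd_def)
      then show False using nv aw by simp
    qed
    then show ?thesis using aT by (auto simp: W_def closed_nbhd_def nbhd_def T_def)
  qed
  have bW: "b \<in> W"
  proof -
    have "{v,b} \<notin> E"
    proof
      assume "{v,b} \<in> E"
      then have "{v,b} \<in> ET" using bT vT by (auto simp: ET_def T_def)
      then have "b \<in> nbhd T ET v" using bT by (simp add: nbhd_def)
      then show False using nv bw by simp
    qed
    then show ?thesis using bT by (auto simp: W_def closed_nbhd_def nbhd_def T_def)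
  qed
  have WT: "W \<subseteq> T - {w}"
    using vw xE wT xV by (auto simp: W_def closed_nbhd_def nbhd_def T_def ET_def insert_commute)
  have "\<not> (adj_in W E)\<^sup>*\<^sup>* a b"
  proof
    assume r: "(adj_in W E)\<^sup>*\<^sup>* a b"
    have "(adj_in (T - {w}) ET)\<^sup>*\<^sup>* a b"
    proof (rule reach_mono[OF _ r])
      fix p q assume "adj_in W E p q"
      then show "adj_in (T - {w}) ET p q" using WT by (auto simp: adj_in_def ET_def T_def)
    qed
    show False by (rule cut[OF acT _ wT _ aT(2) bT(2) _ _ \<open>(adj_in (T - {w}) ET)\<^sup>*\<^sup>* a b\<close>]) (use aT aw bT in auto)
  qed
  then have "disconnected_graph W E" using aW bW by (auto simp: disconnected_graph_def)
  moreover have "connected_graph V E" using chand_conn[OF c] v unfolding T_def ET_def by blast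
  moreover have "v \<in> V" using vT by (simp add: T_def)
  ultimately show ?thesis unfolding has_full_star_cutset_def full_star_cutset_def W_def by blast
qed



lemma conn_nd: "(\<forall>p\<in>W. \<forall>q\<in>W. (adj_in W E)\<^sup>*\<^sup>* p q) \<Longrightarrow> \<not> disconnected_graph W E"
  by (auto simp: disconnected_graph_def)

lemma hub_nd: "h \<in> W \<Longrightarrow> (\<forall>p\<in>W. (adj_in W E)\<^sup>*\<^sup>* p h) \<Longrightarrow> \<not> disconnected_graph W E"
  by (intro conn_nd) (meson reach_sym rtranclp_trans)

lemma part2b:
  assumes c: "chandelier V E x" and lux: "luxury_chandelier V E x" and u: "u \<in> V"
  shows "\<not> disconnected_graph (V - closed_nbhd V E u) E"
proof -
  define T where "T = V - {x}"
  define ET where "ET = {e \<in> E. x \<notin> e}"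
  have g: "graph V E" and xV: "x \<in> V" and gT: "graph T ET" and cT: "connected_graph T ET"
    and acT: "acyclic_graph T ET" and c3: "card T \<ge> 3" and fT: "finite T"
    and L: "nbhd V E x = leaves T ET"
    using chand_facts[OF c] unfolding T_def ET_def by auto
  have lx: "\<And>v. v \<in> T \<Longrightarrow> {x,v} \<in> E \<longleftrightarrow> v \<in> leaves T ET" using leaf_E[OF c] unfolding T_def ET_def by blast
  have lux2: "\<And>v w. v \<in> leaves T ET \<Longrightarrow> w \<in> nbhd T ET v \<Longrightarrow> degree T ET w = 2"
    using lux unfolding luxury_chandelier_def T_def ET_def Let_def by blast
  have ETE: "ET \<subseteq> E" by (auto simp: ET_def)
  have ETi: "\<And>p q. p \<in> T \<Longrightarrow> q \<in> T \<Longrightarrow> {p,q} \<in> E \<Longrightarrow> {p,q} \<in> ET" by (auto simp: ET_def T_def)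
  have walk: "\<exists>cs. wk T ET cs \<and> distinct cs \<and> hd cs = p \<and> last cs = q" if "p \<in> T" "q \<in> T" for p q
    using cT that by (intro reach_wk) (auto simp: connected_graph_def)
  have wkE: "\<And>W cs. wk T ET cs \<Longrightarrow> set cs \<subseteq> W \<Longrightarrow> wk W E cs" using ETE by (auto simp: wk_def)
  have hl: "\<And>cs. wk T ET cs \<Longrightarrow> hd cs = cs!0 \<and> last cs = cs!(length cs - 1)"
    by (auto simp: wk_def hd_conv_nth last_conv_nth)
  have wr: "(adj_in W E)\<^sup>*\<^sup>* (hd cs) (last cs)" if "wk W E cs" for W cs
    using wk_reach[OF that, of 0 "length cs - 1"] that by (auto simp: wk_def hd_conv_nth last_conv_nth)
  show ?thesis
  proof (cases "u = x")
    case True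
    have W: "V - closed_nbhd V E u = T - leaves T ET"
      using L True by (auto simp: closed_nbhd_def T_def leaves_def)
    show ?thesis unfolding W
    proof (rule conn_nd, intro ballI)
      fix p q assume p: "p \<in> T - leaves T ET" and q: "q \<in> T - leaves T ET"
      obtain cs where cs: "wk T ET cs" "distinct cs" "hd cs = p" "last cs = q" using walk p q by blast
      have "set cs \<subseteq> T - leaves T ET"
      proof
        fix z assume "z \<in> set cs"
        then obtain i where i: "i < length cs" "cs!i = z" by (auto simp: in_set_conv_nth)
        have zT: "z \<in> T" using cs(1) \<open>z \<in> set cs\<close> by (auto simp: wk_def)
        consider "i = 0" | "i = length cs - 1" | "0 < i \<and> Suc i < length cs" using i by linarith
        then show "z \<in> T - leaves T ET"
        proof cases
          case 1 then show ?thesis using hl[OF cs(1)] cs p i by auto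
        next
          case 2 then show ?thesis using hl[OF cs(1)] cs q i by auto
        next
          case 3 then have "2 \<le> degree T ET z" using int_deg[OF fT cs(1) cs(2)] i by auto
          then show ?thesis using zT by (auto simp: leaves_def)
        qed
      qed
      then show "(adj_in (T - leaves T ET) E)\<^sup>*\<^sup>* p q" using wr[OF wkE[OF cs(1)]] cs by auto
    qed
  next
    case False
    then have uT: "u \<in> T" using u by (simp add: T_def)
    show ?thesis
    proof (cases "u \<in> leaves T ET")
      case True
      then have "card (nbhd T ET u) = 1" by (simp add: leaves_def degree_def)
      then obtain w where nu: "nbhd T ET u = {w}" by (auto simp: card_1_singleton_iff)
      have wT: "w \<in> T" and uw: "{u,w} \<in> ET" using nu by (auto simp: nbhd_def)
      have d2: "degree T ET w = 2" using lux2[OF True] nu by simp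
      have unw: "u \<in> nbhd T ET w" using uw uT by (auto simp: nbhd_def insert_commute)
      have fw: "finite (nbhd T ET w)" using fT by (simp add: nbhd_def)
      have "card (nbhd T ET w - {u}) = 1" using d2 unw fw by (simp add: degree_def)
      then obtain w' where "nbhd T ET w - {u} = {w'}" by (auto simp: card_1_singleton_iff)
      then have nw: "nbhd T ET w \<subseteq> {u, w'}" by auto
      have xu: "{x,u} \<in> E" using lx[OF uT] True by simp
      have W: "V - closed_nbhd V E u = T - {u,w}"
      proof -
        have "nbhd V E u = {w, x}"
        proof
          show "{w,x} \<subseteq> nbhd V E u" using wT uw xu xV ETE by (auto simp: nbhd_def T_def insert_commute)
          show "nbhd V E u \<subseteq> {w,x}"
          proof
            fix n assume n: "n \<in> nbhd V E u"
            show "n \<in> {w,x}"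
            proof (cases "n = x")
              case False
              then have "n \<in> T" "{u,n} \<in> ET" using n uT by (auto simp: nbhd_def T_def ET_def)
              then have "n \<in> nbhd T ET u" by (simp add: nbhd_def)
              then show ?thesis using nu by simp
            qed simp
          qed
        qed
        then show ?thesis by (auto simp: closed_nbhd_def T_def)
      qed
      show ?thesis unfolding W
      proof (rule conn_nd, intro ballI)
        fix p q assume p: "p \<in> T - {u,w}" and q: "q \<in> T - {u,w}"
        obtain cs where cs: "wk T ET cs" "distinct cs" "hd cs = p" "last cs = q" using walk p q by blast
        have ends: "\<And>i. i < length cs \<Longrightarrow> \<not> (0 < i \<and> Suc i < length cs) \<Longrightarrow> cs!i \<notin> {u,w}"
        proof -
          fix i assume i: "i < length cs" "\<not> (0 < i \<and> Suc i < length cs)"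
          then have "i = 0 \<or> i = length cs - 1" by linarith
          then show "cs!i \<notin> {u,w}" using hl[OF cs(1)] cs p q by auto
        qed
        have nou: "u \<notin> set cs"
        proof
          assume "u \<in> set cs"
          then obtain i where i: "i < length cs" "cs!i = u" by (auto simp: in_set_conv_nth)
          then have "0 < i \<and> Suc i < length cs" using ends by blast
          then have "2 \<le> degree T ET u" using int_deg[OF fT cs(1) cs(2)] i by auto
          then show False using True by (simp add: leaves_def)
        qed
        have now: "w \<notin> set cs"
        proof
          assume "w \<in> set cs"
          then obtain i where i: "i < length cs" "cs!i = w" by (auto simp: in_set_conv_nth)
          then have ii: "0 < i \<and> Suc i < length cs" using ends by blast
          then have nb: "cs!(i-1) \<in> {u,w'}" "cs!Suc i \<in> {u,w'}" "cs!(i-1) \<noteq> cs!Suc i"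
            using int_nbrs[OF cs(1) cs(2)] i nw by blast+
          then have "cs!(i-1) = u \<or> cs!Suc i = u" by auto
          moreover have "cs!(i-1) \<in> set cs" "cs!Suc i \<in> set cs" using ii by auto
          ultimately show False using nou by auto
        qed
        have "set cs \<subseteq> T - {u,w}" using cs(1) nou now by (auto simp: wk_def)
        then show "(adj_in (T - {u,w}) E)\<^sup>*\<^sup>* p q" using wr[OF wkE[OF cs(1)]] cs by auto
      qed
    next
      case False
      have xnu: "{u,x} \<notin> E" using lx[OF uT] False by (simp add: insert_commute)
      have nbu: "nbhd V E u = nbhd T ET u"
        using xnu uT by (auto simp: nbhd_def T_def ET_def)
      define W where "W = V - closed_nbhd V E u"
      have W: "W = insert x T - insert u (nbhd T ET u)"
        using nbu xV uT by (auto simp: W_def closed_nbhd_def T_def nbhd_def)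
      have xW: "x \<in> W" using W uT by (auto simp: T_def nbhd_def)
      have "\<forall>p\<in>W. (adj_in W E)\<^sup>*\<^sup>* p x"
      proof
        fix p assume pW: "p \<in> W"
        show "(adj_in W E)\<^sup>*\<^sup>* p x"
        proof (cases "p = x")
          case False
          then have pT: "p \<in> T" "p \<noteq> u" "{u,p} \<notin> ET" using pW W by (auto simp: nbhd_def)
          obtain cs where cs: "wk T ET cs" "distinct cs" "hd cs = u" "last cs = p" using walk uT pT(1) by blast
          have cne: "cs \<noteq> []" using cs by (simp add: wk_def)
          have l3: "length cs \<ge> 3"
          proof (rule ccontr)
            assume "\<not> length cs \<ge> 3"
            moreover have "length cs \<noteq> 1"
            proof
              assume "length cs = 1"
              then have "hd cs = last cs" using cne by (simp add: hd_conv_nth last_conv_nth)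
              then show False using cs pT by simp
            qed
            moreover have "length cs \<noteq> 0" using cne by simp
            ultimately have l2: "length cs = 2" by arith
            then have "{cs!0, cs!Suc 0} \<in> ET" using cs(1) by (auto simp: wk_def)
            moreover have "cs!0 = u" "cs!Suc 0 = p" using hl[OF cs(1)] cs l2 by auto
            ultimately show False using pT by simp
          qed
          obtain qs where qs: "wk T ET qs" "distinct qs" "take (length cs) qs = cs"
            and mx: "\<forall>n\<in>T. {last qs, n} \<in> ET \<longrightarrow> n \<in> set qs"
            using max_ext[OF fT cs(1) cs(2)] by blast
          have "length (take (length cs) qs) = length cs" using qs(3) by simp
          then have lq: "length cs \<le> length qs" by simp
          have qnth: "qs!k = cs!k" if "k < length cs" for k
            using qs(3) nth_take[OF that, of qs] by simp
          have q0: "qs!0 = u" using qnth[of 0] l3 hl[OF cs(1)] cs cne by simp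
          have qm: "qs!(length cs - 1) = p" using qnth[of "length cs - 1"] l3 hl[OF cs(1)] cs cne by simp
          have edq: "\<forall>k. Suc k < length qs \<longrightarrow> {qs!k, qs!Suc k} \<in> ET" and subq: "set qs \<subseteq> T"
            using qs(1) by (auto simp: wk_def)
          have nbl: "{n\<in>T. {last qs, n} \<in> ET} = {qs!(length qs - 2)}"
            using end_nbrs[OF gT acT qs(1) qs(2) _ mx] l3 lq by simp
          have "degree T ET (last qs) = 1" using nbl by (simp add: degree_def nbhd_def)
          moreover have lT: "last qs \<in> T" using qs(1) by (auto simp: wk_def)
          ultimately have "last qs \<in> leaves T ET" by (simp add: leaves_def)
          then have xl: "{x, last qs} \<in> E" using lx lT by blast
          have inW: "qs!k \<in> W" if k: "2 \<le> k" "k < length qs" for k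
          proof -
            have kT: "qs!k \<in> T" using subq k by auto
            have "qs!k \<noteq> u"
            proof
              assume "qs!k = u"
              then have "qs!k = qs!0" using q0 by simp
              moreover have "0 < length qs" using k by linarith
              ultimately have "k = 0" using nth_eq_iff_index_eq[OF qs(2), of k 0] k by blast
              then show False using k by simp
            qed
            moreover have "{u, qs!k} \<notin> ET"
            proof
              assume "{u, qs!k} \<in> ET"
              then show False using chord[OF acT subq qs(2) edq, of 0 k] k q0 by simp
            qed
            ultimately show ?thesis using kT W by (auto simp: nbhd_def)
          qed
          have "(adj_in W E)\<^sup>*\<^sup>* (qs!(length cs - 1)) (qs!(length qs - 1))"
          proof (rule seg_reach)
            show "\<forall>k. length cs - 1 \<le> k \<and> k \<le> length qs - 1 \<longrightarrow> qs ! k \<in> W"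
              using inW l3 lq by auto
            show "\<forall>k. Suc k < length qs \<longrightarrow> {qs ! k, qs ! Suc k} \<in> E" using edq ETE by auto
          qed (use l3 lq in auto)
          moreover have "qs \<noteq> []" using l3 lq by auto
          then have "qs!(length qs - 1) = last qs" by (simp add: last_conv_nth)
          moreover
          moreover have "adj_in W E (last qs) x"
            using xl xW inW[of "length qs - 1"] l3 lq \<open>qs!(length qs - 1) = last qs\<close>
            by (auto simp: adj_in_def insert_commute)
          ultimately show ?thesis using qm by auto
        qed simp
      qed
      then show ?thesis using hub_nd[OF xW] unfolding W_def by blast
    qed
  qed
qed


theorem mainTheorem12:
  shows "(\<forall>(V::'a set) E. tree V E \<longrightarrow>
            (\<not> has_full_star_cutset V E \<longleftrightarrow> path_graph V E \<and> card V \<le> 4)) \<and>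
         (\<forall>(V::'a set) E x. chandelier V E x \<longrightarrow>
            (\<not> has_full_star_cutset V E \<longleftrightarrow> luxury_chandelier V E x))"
proof (intro conjI allI impI)
  fix V :: "'a set" and E assume "tree V E"
  then show "(\<not> has_full_star_cutset V E \<longleftrightarrow> path_graph V E \<and> card V \<le> 4)"
    using part1a part1b by blast
next
  fix V :: "'a set" and E x assume c: "chandelier V E x"
  show "(\<not> has_full_star_cutset V E \<longleftrightarrow> luxury_chandelier V E x)"
  proof
    assume "\<not> has_full_star_cutset V E"
    then show "luxury_chandelier V E x" using part2a[OF c] by blast
  next
    assume l: "luxury_chandelier V E x"
    show "\<not> has_full_star_cutset V E" unfolding nocut_iff using part2b[OF c l] by blast
  qed
qed

end
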